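(* Let $\Lambda$ be diagonal with entries in $[0,1]$, let $W,\tilde W\in\mathbb{R}^{n\times n}$ be row-stochastic, let $\beta\in\mathbb{R}^n$ with $\beta_i\in(0,1)$ for all $i$, and set $W^{(1)}=(I-[\beta])W$, $W^{(2)}=[\beta]\tilde W$. If $\rho(\Lambda W)<1$ or $\rho(\Lambda\tilde W)<1$, then the FJ-MM system $x(t+1)=\Lambda(W^{(1)}x(t)+W^{(2)}x(t-1))+(I-\Lambda)s$ is exponentially stable, equivalently $\rho(\Lambda(W^{(1)}+W^{(2)}))<1$.
   Context: $[\beta]$ denotes the diagonal matrix with diagonal entries $\beta_1,\dots,\beta_n$. $\rho$ denotes spectral radius. Exponential stability of the FJ-MM system means $\rho(\bar A_d)<1$ for $\bar A_d=\begin{pmatrix}0 & I\\ \Lambda W^{(2)} & \Lambda W^{(1)}\end{pmatrix}$. *)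

theory Defs
  imports "Jordan_Normal_Form.Spectral_Radius"
begin

definition rho :: "real mat \<Rightarrow> real" where
  "rho A = spectral_radius (map_mat complex_of_real A)"

definition row_stochastic :: "nat \<Rightarrow> real mat \<Rightarrow> bool" where
  "row_stochastic n W \<longleftrightarrow> W \<in> carrier_mat n n \<and>
     (\<forall>i<n. \<forall>j<n. 0 \<le> W $$ (i, j)) \<and>
     (\<forall>i<n. (\<Sum>j<n. W $$ (i, j)) = 1)"

definition fjmm_matrix :: "nat \<Rightarrow> real mat \<Rightarrow> real mat \<Rightarrow> real mat \<Rightarrow> real mat" where
  "fjmm_matrix n Lam W1 W2 =
     four_block_mat (0\<^sub>m n n) (1\<^sub>m n) (Lam * W2) (Lam * W1)"

end

theory Submission
  imports Defs
begin


definition Tm :: "nat \<Rightarrow> (nat \<Rightarrow> nat \<Rightarrow> real) \<Rightarrow> (nat \<Rightarrow> real) \<Rightarrow> nat \<Rightarrow> real" where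
  "Tm n P y = (\<lambda>i. \<Sum>j<n. P i j * y j)"

lemma Tm_apply: "Tm n P y i = (\<Sum>j<n. P i j * y j)"
  by (simp add: Tm_def)

lemma tm_zero:
  assumes P0: "\<forall>i<n. \<forall>j<n. 0 \<le> P i j"
    and k: "\<forall>i<n. (Tm n P ^^ k) (\<lambda>_. 1) i < 1"
    and x0: "\<forall>i<n. 0 \<le> x i"
    and xle: "\<forall>i<n. x i \<le> Tm n P x i"
  shows "\<forall>i<n. x i = 0"
proof (cases "n = 0")
  case True then show ?thesis by simp
next
  case False
  define m where "m = Max (x ` {..<n})"
  have fin: "finite (x ` {..<n})" and ne: "x ` {..<n} \<noteq> {}" using False by auto
  have xm: "x i \<le> m" if "i < n" for i unfolding m_def using fin that by auto
  have claim: "\<forall>i<n. x i \<le> m * (Tm n P ^^ q) (\<lambda>_. 1) i" for q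
  proof (induction q)
    case 0 then show ?case using xm by simp
  next
    case (Suc q)
    show ?case
    proof (intro allI impI)
      fix i assume i: "i < n"
      have "x i \<le> (\<Sum>j<n. P i j * x j)" using xle i by (auto simp: Tm_apply)
      also have "\<dots> \<le> (\<Sum>j<n. P i j * (m * (Tm n P ^^ q) (\<lambda>_. 1) j))"
        by (rule sum_mono) (use Suc.IH P0 i in \<open>auto intro: mult_left_mono\<close>)
      also have "\<dots> = m * (Tm n P ^^ Suc q) (\<lambda>_. 1) i"
        by (simp add: Tm_apply sum_distrib_left algebra_simps)
      finally show "x i \<le> m * (Tm n P ^^ Suc q) (\<lambda>_. 1) i" .
    qed
  qed
  obtain i0 where i0: "i0 < n" "x i0 = m" using Max_in[OF fin ne] unfolding m_def by auto
  have "m \<le> m * (Tm n P ^^ k) (\<lambda>_. 1) i0" using claim[of k] i0 by auto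
  moreover have "m \<ge> 0" using x0 i0 by auto
  moreover have "(Tm n P ^^ k) (\<lambda>_. 1) i0 < 1" using k i0 by auto
  ultimately have "m * (1 - (Tm n P ^^ k) (\<lambda>_. 1) i0) \<le> 0" "0 < 1 - (Tm n P ^^ k) (\<lambda>_. 1) i0"
    by (auto simp: algebra_simps)
  then have "m \<le> 0" by (simp add: mult_le_0_iff)
  then show ?thesis using xm x0 by (meson antisym order.trans)
qed

lemma tm_bounds:
  assumes X0: "\<forall>i<n. \<forall>j<n. 0 \<le> X i j"
    and Xr: "\<forall>i<n. (\<Sum>j<n. X i j) \<le> 1"
  shows "\<forall>i<n. 0 \<le> (Tm n X ^^ k) (\<lambda>_. 1) i \<and> (Tm n X ^^ k) (\<lambda>_. 1) i \<le> 1"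
proof (induction k)
  case 0 then show ?case by simp
next
  case (Suc k)
  show ?case
  proof (intro allI impI conjI)
    fix i assume i: "i < n"
    have "0 \<le> (\<Sum>j<n. X i j * (Tm n X ^^ k) (\<lambda>_. 1) j)"
    proof (rule sum_nonneg)
      fix j assume "j \<in> {..<n}"
      then show "0 \<le> X i j * (Tm n X ^^ k) (\<lambda>_. 1) j"
        using Suc.IH X0 i by (simp add: mult_nonneg_nonneg)
    qed
    then show "0 \<le> (Tm n X ^^ Suc k) (\<lambda>_. 1) i" by (simp add: Tm_apply)
    have "(Tm n X ^^ Suc k) (\<lambda>_. 1) i = (\<Sum>j<n. X i j * (Tm n X ^^ k) (\<lambda>_. 1) j)"
      by (simp add: Tm_apply)
    also have "\<dots> \<le> (\<Sum>j<n. X i j)"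
      by (rule sum_mono) (use Suc.IH X0 i in \<open>auto intro: mult_left_le\<close>)
    also have "\<dots> \<le> 1" using Xr i by auto
    finally show "(Tm n X ^^ Suc k) (\<lambda>_. 1) i \<le> 1" .
  qed
qed

lemma tm_pump:
  assumes X0: "\<forall>i<n. \<forall>j<n. 0 \<le> X i j"
    and Xr: "\<forall>i<n. (\<Sum>j<n. X i j) \<le> 1"
    and c: "0 < c" "c \<le> 1"
    and MX: "\<forall>i<n. \<forall>j<n. c * X i j \<le> M i j"
    and rows: "\<forall>i<n. (\<Sum>j<n. M i j) = (\<Sum>j<n. X i j)"
  shows "\<forall>i<n. c^k * (1 - (Tm n X ^^ k) (\<lambda>_. 1) i) \<le> 1 - (Tm n M ^^ k) (\<lambda>_. 1) i"
proof (induction k)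
  case 0 then show ?case by simp
next
  case (Suc k)
  note B = tm_bounds[OF X0 Xr, of k]
  show ?case
  proof (intro allI impI)
    fix i assume i: "i < n"
    let ?e = "(Tm n X ^^ k) (\<lambda>_. 1)" and ?u = "(Tm n M ^^ k) (\<lambda>_. 1)"
    have M0: "0 \<le> M i j" if "j < n" for j
    proof -
      have "0 \<le> c * X i j" using c X0 i that by simp
      moreover have "c * X i j \<le> M i j" using MX i that by blast
      ultimately show ?thesis by (rule order.trans)
    qed
    have "1 - (Tm n M ^^ Suc k) (\<lambda>_. 1) i = (1 - (\<Sum>j<n. M i j)) + (\<Sum>j<n. M i j * (1 - ?u j))"
      by (simp add: Tm_apply algebra_simps sum_subtractf)
    also have "\<dots> \<ge> (1 - (\<Sum>j<n. X i j)) * c^(Suc k) + (\<Sum>j<n. (c * X i j) * (c^k * (1 - ?e j)))"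
    proof (rule add_mono)
      have "0 \<le> 1 - (\<Sum>j<n. X i j)" using Xr i by auto
      moreover have "c^(Suc k) \<le> 1" using c power_le_one[of c "Suc k"] by simp
      ultimately show "(1 - (\<Sum>j<n. X i j)) * c^(Suc k) \<le> 1 - (\<Sum>j<n. M i j)"
        using rows i by (simp add: mult_left_le)
      show "(\<Sum>j<n. (c * X i j) * (c^k * (1 - ?e j))) \<le> (\<Sum>j<n. M i j * (1 - ?u j))"
      proof (rule sum_mono)
        fix j assume "j \<in> {..<n}"
        then have j: "j < n" by auto
        have "0 \<le> c^k * (1 - ?e j)" using B j c by auto
        then have "(c * X i j) * (c^k * (1 - ?e j)) \<le> M i j * (c^k * (1 - ?e j))"
          using MX i j by (simp add: mult_right_mono)
        also have "\<dots> \<le> M i j * (1 - ?u j)"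
          using Suc.IH j M0 j by (simp add: mult_left_mono)
        finally show "(c * X i j) * (c^k * (1 - ?e j)) \<le> M i j * (1 - ?u j)" .
      qed
    qed
    also have "(1 - (\<Sum>j<n. X i j)) * c^(Suc k) + (\<Sum>j<n. (c * X i j) * (c^k * (1 - ?e j)))
        = c^(Suc k) * (1 - (Tm n X ^^ Suc k) (\<lambda>_. 1) i)"
      by (simp add: Tm_apply algebra_simps sum_subtractf sum_distrib_left)
    finally show "c^(Suc k) * (1 - (Tm n X ^^ Suc k) (\<lambda>_. 1) i) \<le> 1 - (Tm n M ^^ Suc k) (\<lambda>_. 1) i" .
  qed
qed


lemma sum_lessThan_add_split: "(\<Sum>j<(a::nat)+b. f j) = (\<Sum>j<a. f j) + (\<Sum>j<b. f (a+j))"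
  by (induction b) (simp_all add: add.assoc)

lemma mult_mat_vec_index_sum:
  assumes "A \<in> carrier_mat n m" "v \<in> carrier_vec m" "i < n"
  shows "(A *\<^sub>v v) $ i = (\<Sum>j<m. A $$ (i,j) * v $ j)"
  using assms by (auto simp: mult_mat_vec_def scalar_prod_def atLeast0LessThan intro!: sum.cong)

lemma Tm_scale:
  assumes "\<forall>i<n. \<forall>j<n. Q i j = t * P i j"
  shows "\<forall>i<n. (Tm n Q ^^ k) y i = t^k * (Tm n P ^^ k) y i"
proof (induction k)
  case 0 then show ?case by simp
next
  case (Suc k)
  show ?case
  proof (intro allI impI)
    fix i assume i: "i < n"
    have "(Tm n Q ^^ Suc k) y i = (\<Sum>j<n. Q i j * (Tm n Q ^^ k) y j)" by (simp add: Tm_apply)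
    also have "\<dots> = (\<Sum>j<n. t^(Suc k) * (P i j * (Tm n P ^^ k) y j))"
      by (rule sum.cong) (use assms Suc.IH i in auto)
    also have "\<dots> = t^Suc k * (Tm n P ^^ Suc k) y i"
      by (simp add: Tm_apply sum_distrib_left)
    finally show "(Tm n Q ^^ Suc k) y i = t^Suc k * (Tm n P ^^ Suc k) y i" .
  qed
qed

lemma Tm_pow:
  assumes A: "A \<in> carrier_mat n n"
  shows "\<forall>y. \<forall>i<n. (Tm n (\<lambda>i j. A $$ (i,j)) ^^ k) y i = (\<Sum>j<n. (A ^\<^sub>m k) $$ (i,j) * y j)"
proof (induction k)
  case 0
  show ?case
  proof (intro allI impI)
    fix y i assume i: "i < n"
    have "(\<Sum>j<n. (A ^\<^sub>m 0) $$ (i,j) * y j) = (\<Sum>j\<in>{i}. (A ^\<^sub>m 0) $$ (i,j) * y j)"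
      by (rule sum.mono_neutral_right) (use i A in auto)
    then show "(Tm n (\<lambda>i j. A $$ (i,j)) ^^ 0) y i = (\<Sum>j<n. (A ^\<^sub>m 0) $$ (i,j) * y j)"
      using i A by simp
  qed
next
  case (Suc k)
  show ?case
  proof (intro allI impI)
    fix y i assume i: "i < n"
    let ?T = "Tm n (\<lambda>i j. A $$ (i,j))"
    have Ak: "A ^\<^sub>m k \<in> carrier_mat n n" using A by auto
    have "(?T ^^ Suc k) y i = (?T ^^ k) (?T y) i" by (simp add: funpow_Suc_right del: funpow.simps)
    also have "\<dots> = (\<Sum>j<n. (A ^\<^sub>m k) $$ (i,j) * ?T y j)"
      using Suc.IH[rule_format, of i "?T y"] i by simp
    also have "\<dots> = (\<Sum>j<n. (A ^\<^sub>m k) $$ (i,j) * (\<Sum>l<n. A $$ (j,l) * y l))"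
      by (simp add: Tm_apply)
    also have "\<dots> = (\<Sum>l<n. (\<Sum>j<n. (A ^\<^sub>m k) $$ (i,j) * A $$ (j,l)) * y l)"
    proof -
      have "(\<Sum>j<n. (A ^\<^sub>m k) $$ (i,j) * (\<Sum>l<n. A $$ (j,l) * y l))
          = (\<Sum>j<n. \<Sum>l<n. (A ^\<^sub>m k) $$ (i,j) * A $$ (j,l) * y l)"
        by (simp add: sum_distrib_left mult.assoc)
      also have "\<dots> = (\<Sum>l<n. \<Sum>j<n. (A ^\<^sub>m k) $$ (i,j) * A $$ (j,l) * y l)"
        by (rule sum.swap)
      also have "\<dots> = (\<Sum>l<n. (\<Sum>j<n. (A ^\<^sub>m k) $$ (i,j) * A $$ (j,l)) * y l)"
        by (simp add: sum_distrib_right)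
      finally show ?thesis .
    qed
    also have "\<dots> = (\<Sum>l<n. (A ^\<^sub>m Suc k) $$ (i,l) * y l)"
    proof (rule sum.cong)
      fix l assume "l \<in> {..<n}"
      then have l: "l < n" by auto
      have "(A ^\<^sub>m Suc k) $$ (i,l) = (A ^\<^sub>m k * A) $$ (i,l)" by simp
      also have "\<dots> = (\<Sum>j<n. (A ^\<^sub>m k) $$ (i,j) * A $$ (j,l))"
        using Ak A i l by (auto simp: scalar_prod_def atLeast0LessThan intro!: sum.cong)
      finally show "(\<Sum>j<n. (A ^\<^sub>m k) $$ (i,j) * A $$ (j,l)) * y l = (A ^\<^sub>m Suc k) $$ (i,l) * y l" by simp
    qed simp
    finally show "(?T ^^ Suc k) y i = (\<Sum>l<n. (A ^\<^sub>m Suc k) $$ (i,l) * y l)" .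
  qed
qed

lemma eigvec_entries:
  assumes A: "A \<in> carrier_mat n n" and ev: "eigenvector A v mu"
  shows "v \<in> carrier_vec n" "\<exists>i<n. v $ i \<noteq> 0"
    "\<forall>i<n. (\<Sum>j<n. A $$ (i,j) * v $ j) = mu * v $ i"
proof -
  show v: "v \<in> carrier_vec n" using ev A unfolding eigenvector_def by auto
  have "v \<noteq> 0\<^sub>v n" using ev A unfolding eigenvector_def by auto
  then show "\<exists>i<n. v $ i \<noteq> 0" using v by (auto simp: vec_eq_iff)
  show "\<forall>i<n. (\<Sum>j<n. A $$ (i,j) * v $ j) = mu * v $ i"
  proof (intro allI impI)
    fix i assume i: "i < n"
    have "(A *\<^sub>v v) $ i = (mu \<cdot>\<^sub>v v) $ i" using ev unfolding eigenvector_def by auto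
    then show "(\<Sum>j<n. A $$ (i,j) * v $ j) = mu * v $ i"
      using mult_mat_vec_index_sum[OF A v i] v i by simp
  qed
qed

lemma eigvec_intro:
  assumes A: "A \<in> carrier_mat n n" and v: "v \<in> carrier_vec n" and nz: "\<exists>i<n. v $ i \<noteq> 0"
    and eq: "\<forall>i<n. (\<Sum>j<n. A $$ (i,j) * v $ j) = mu * v $ i"
  shows "eigenvector A v mu"
  unfolding eigenvector_def
proof (intro conjI)
  show "v \<in> carrier_vec (dim_row A)" using A v by auto
  show "v \<noteq> 0\<^sub>v (dim_row A)" using nz A v by auto
  show "A *\<^sub>v v = mu \<cdot>\<^sub>v v"
    by (rule eq_vecI) (use A v eq mult_mat_vec_index_sum[OF A v] in auto)
qed


lemma spec_nonneg:
  assumes A: "A \<in> carrier_mat n n" and n: "n > 0"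
  shows "0 \<le> spectral_radius A"
  using spectral_radius_mem_max(1)[OF A n] by auto

lemma rho_pow_small:
  assumes X: "X \<in> carrier_mat n n" and X0: "\<forall>i<n. \<forall>j<n. 0 \<le> X $$ (i,j)"
    and r: "rho X < 1"
  shows "\<exists>k. \<forall>i<n. (Tm n (\<lambda>i j. X $$ (i,j)) ^^ k) (\<lambda>_. 1) i < 1"
proof (cases "n = 0")
  case True then show ?thesis by simp
next
  case False
  then have n: "n > 0" by simp
  define Xc where "Xc = map_mat complex_of_real X"
  have Xc: "Xc \<in> carrier_mat n n" using X unfolding Xc_def by auto
  define r0 where "r0 = rho X"
  have r0: "0 \<le> r0" "r0 < 1" using spec_nonneg[OF Xc n] r unfolding r0_def rho_def Xc_def by auto
  define t where "t = 2 / (1 + r0)"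
  have t1: "1 < t" using r0 unfolding t_def by (simp add: field_simps)
  have tr: "t * r0 < 1" using r0 unfolding t_def by (simp add: field_simps)
  define Y where "Y = t \<cdot>\<^sub>m X"
  have Y: "Y \<in> carrier_mat n n" using X unfolding Y_def by auto
  define Yc where "Yc = map_mat complex_of_real Y"
  have Yc: "Yc \<in> carrier_mat n n" using Y unfolding Yc_def by auto
  have "spectral_radius Yc < 1"
  proof -
    obtain mu where mu: "mu \<in> spectrum Yc" "spectral_radius Yc = norm mu"
      using spectral_radius_mem_max(1)[OF Yc n] by auto
    then obtain v where ev: "eigenvector Yc v mu" unfolding spectrum_def eigenvalue_def by auto
    note E = eigvec_entries[OF Yc ev]
    have "eigenvector Xc v (mu / complex_of_real t)"
    proof (rule eigvec_intro[OF Xc E(1) E(2)], intro allI impI)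
      fix i assume i: "i < n"
      have "(\<Sum>j<n. Yc $$ (i,j) * v $ j) = complex_of_real t * (\<Sum>j<n. Xc $$ (i,j) * v $ j)"
        unfolding sum_distrib_left
        by (rule sum.cong) (use i X in \<open>auto simp: Yc_def Xc_def Y_def\<close>)
      then have "complex_of_real t * (\<Sum>j<n. Xc $$ (i,j) * v $ j) = mu * v $ i" using E(3) i by auto
      then show "(\<Sum>j<n. Xc $$ (i,j) * v $ j) = mu / complex_of_real t * v $ i"
        using t1 by (simp add: field_simps)
    qed
    then have "norm (mu / complex_of_real t) \<in> norm ` spectrum Xc"
      unfolding spectrum_def eigenvalue_def by auto
    from spectral_radius_mem_max(2)[OF Xc n this]
    have "norm mu / t \<le> r0" using t1 unfolding r0_def rho_def Xc_def by (simp add: norm_divide)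
    then have "norm mu \<le> t * r0" using t1 by (simp add: field_simps)
    then show ?thesis using mu tr by simp
  qed
  from spectral_radius_jnf_norm_bound_less_1_upper_triangular[OF Yc this]
  obtain c0 where c0: "\<forall>k. norm_bound (Yc ^\<^sub>m k) c0" by auto
  have Ypow: "Yc ^\<^sub>m k = map_mat complex_of_real (Y ^\<^sub>m k)" for k
    unfolding Yc_def using of_real_hom.mat_hom_pow[OF Y] by metis
  have bnd: "\<bar>(Y ^\<^sub>m k) $$ (i,j)\<bar> \<le> c0" if "i < n" "j < n" for k i j
  proof -
    have "norm ((Yc ^\<^sub>m k) $$ (i,j)) \<le> c0" using c0 that Yc unfolding norm_bound_def by auto
    then show ?thesis unfolding Ypow using that Y by simp
  qed
  obtain k where k: "real n * c0 < t ^ k" using real_arch_pow[OF t1] by blast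
  have "\<forall>i<n. (Tm n (\<lambda>i j. X $$ (i,j)) ^^ k) (\<lambda>_. 1) i < 1"
  proof (intro allI impI)
    fix i assume i: "i < n"
    have "t^k * (Tm n (\<lambda>i j. X $$ (i,j)) ^^ k) (\<lambda>_. 1) i = (Tm n (\<lambda>i j. Y $$ (i,j)) ^^ k) (\<lambda>_. 1) i"
      using Tm_scale[of n "\<lambda>i j. Y $$ (i,j)" t "\<lambda>i j. X $$ (i,j)" k "\<lambda>_. 1"] i X
      unfolding Y_def by auto
    also have "\<dots> = (\<Sum>j<n. (Y ^\<^sub>m k) $$ (i,j))" using Tm_pow[OF Y, of k] i by simp
    also have "\<dots> \<le> (\<Sum>j<n. c0)"
      by (rule sum_mono) (use bnd i in \<open>auto simp: abs_le_iff\<close>)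
    also have "\<dots> = real n * c0" by simp
    also have "\<dots> < t^k" by (rule k)
    finally show "(Tm n (\<lambda>i j. X $$ (i,j)) ^^ k) (\<lambda>_. 1) i < 1" using t1 by simp
  qed
  then show ?thesis by blast
qed


lemma rho_lt1_from_tm:
  assumes M: "M \<in> carrier_mat n n" and n: "n > 0" and M0: "\<forall>i<n. \<forall>j<n. 0 \<le> M $$ (i,j)"
    and k: "\<forall>i<n. (Tm n (\<lambda>i j. M $$ (i,j)) ^^ k) (\<lambda>_. 1) i < 1"
  shows "rho M < 1"
proof (rule ccontr)
  assume "\<not> rho M < 1"
  then have ge: "1 \<le> rho M" by simp
  define Mc where "Mc = map_mat complex_of_real M"
  have Mc: "Mc \<in> carrier_mat n n" using M unfolding Mc_def by auto
  obtain mu where mu: "mu \<in> spectrum Mc" "spectral_radius Mc = norm mu"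
    using spectral_radius_mem_max(1)[OF Mc n] by auto
  have mu1: "1 \<le> norm mu" using ge mu unfolding rho_def Mc_def by simp
  then obtain v where ev: "eigenvector Mc v mu" using mu unfolding spectrum_def eigenvalue_def by auto
  note E = eigvec_entries[OF Mc ev]
  define x where "x j = norm (v $ j)" for j
  have "\<forall>i<n. x i = 0"
  proof (rule tm_zero[OF M0 k])
    show "\<forall>i<n. 0 \<le> x i" unfolding x_def by simp
    show "\<forall>i<n. x i \<le> Tm n (\<lambda>i j. M $$ (i,j)) x i"
    proof (intro allI impI)
      fix i assume i: "i < n"
      have "x i \<le> norm mu * x i" using mu1 unfolding x_def
        by (simp add: mult_le_cancel_right1)
      also have "\<dots> = norm (\<Sum>j<n. Mc $$ (i,j) * v $ j)" using E(3) i unfolding x_def by (simp add: norm_mult)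
      also have "\<dots> \<le> (\<Sum>j<n. norm (Mc $$ (i,j) * v $ j))" by (rule norm_sum)
      also have "\<dots> = (\<Sum>j<n. M $$ (i,j) * x j)"
        by (rule sum.cong) (use i M M0 in \<open>auto simp: Mc_def x_def norm_mult\<close>)
      finally show "x i \<le> Tm n (\<lambda>i j. M $$ (i,j)) x i" by (simp add: Tm_apply)
    qed
  qed
  then show False using E(2) unfolding x_def by auto
qed

lemma fjmm_rho_lt1:
  assumes n: "n > 0" and P: "P \<in> carrier_mat n n" and Q: "Q \<in> carrier_mat n n"
    and P0: "\<forall>i<n. \<forall>j<n. 0 \<le> P $$ (i,j)" and Q0: "\<forall>i<n. \<forall>j<n. 0 \<le> Q $$ (i,j)"
    and k: "\<forall>i<n. (Tm n (\<lambda>i j. P $$ (i,j) + Q $$ (i,j)) ^^ k) (\<lambda>_. 1) i < 1"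
  shows "rho (four_block_mat (0\<^sub>m n n) (1\<^sub>m n) P Q) < 1"
proof (rule ccontr)
  define A where "A = four_block_mat (0\<^sub>m n n) (1\<^sub>m n) P Q"
  assume "\<not> rho (four_block_mat (0\<^sub>m n n) (1\<^sub>m n) P Q) < 1"
  then have ge: "1 \<le> rho A" unfolding A_def by simp
  have A: "A \<in> carrier_mat (n+n) (n+n)" unfolding A_def using P Q by auto
  have e1: "A $$ (i,j) = 0" if "i < n" "j < n" for i j unfolding A_def using that P Q by simp
  have e2: "A $$ (i,n+j) = (if i = j then 1 else 0)" if "i < n" "j < n" for i j
    unfolding A_def using that P Q by simp
  have e3: "A $$ (n+i,j) = P $$ (i,j)" if "i < n" "j < n" for i j unfolding A_def using that P Q by simp
  have e4: "A $$ (n+i,n+j) = Q $$ (i,j)" if "i < n" "j < n" for i j unfolding A_def using that P Q by simp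
  define Ac where "Ac = map_mat complex_of_real A"
  have Ac: "Ac \<in> carrier_mat (n+n) (n+n)" using A unfolding Ac_def by auto
  have nn: "n + n > 0" using n by simp
  obtain mu where mu: "mu \<in> spectrum Ac" "spectral_radius Ac = norm mu"
    using spectral_radius_mem_max(1)[OF Ac nn] by auto
  have mu1: "1 \<le> norm mu" using ge mu unfolding rho_def Ac_def by simp
  then obtain v where ev: "eigenvector Ac v mu" using mu unfolding spectrum_def eigenvalue_def by auto
  note E = eigvec_entries[OF Ac ev]
  have top: "v $ (n+i) = mu * v $ i" if i: "i < n" for i
  proof -
    have "mu * v $ i = (\<Sum>j<n+n. Ac $$ (i,j) * v $ j)" using E(3) i by simp
    also have "\<dots> = (\<Sum>j<n. Ac $$ (i,j) * v $ j) + (\<Sum>j<n. Ac $$ (i,n+j) * v $ (n+j))"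
      by (rule sum_lessThan_add_split)
    also have "(\<Sum>j<n. Ac $$ (i,j) * v $ j) = 0"
      by (rule sum.neutral) (use i A e1 in \<open>auto simp: Ac_def\<close>)
    also have "(\<Sum>j<n. Ac $$ (i,n+j) * v $ (n+j)) = (\<Sum>j\<in>{i}. Ac $$ (i,n+j) * v $ (n+j))"
      by (rule sum.mono_neutral_right) (use i A e2 in \<open>auto simp: Ac_def\<close>)
    also have "\<dots> = v $ (n+i)" using i A e2 by (simp add: Ac_def)
    finally show ?thesis by simp
  qed
  have bot: "(\<Sum>j<n. complex_of_real (P $$ (i,j)) * v $ j) + mu * (\<Sum>j<n. complex_of_real (Q $$ (i,j)) * v $ j)
      = mu * mu * v $ i" if i: "i < n" for i
  proof -
    have "mu * v $ (n+i) = (\<Sum>j<n+n. Ac $$ (n+i,j) * v $ j)" using E(3) i by simp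
    also have "\<dots> = (\<Sum>j<n. Ac $$ (n+i,j) * v $ j) + (\<Sum>j<n. Ac $$ (n+i,n+j) * v $ (n+j))"
      by (rule sum_lessThan_add_split)
    also have "(\<Sum>j<n. Ac $$ (n+i,j) * v $ j) = (\<Sum>j<n. complex_of_real (P $$ (i,j)) * v $ j)"
      by (rule sum.cong) (use i A e3 in \<open>auto simp: Ac_def\<close>)
    also have "(\<Sum>j<n. Ac $$ (n+i,n+j) * v $ (n+j)) = mu * (\<Sum>j<n. complex_of_real (Q $$ (i,j)) * v $ j)"
      unfolding sum_distrib_left
      by (rule sum.cong) (use i A e4 top in \<open>auto simp: Ac_def\<close>)
    finally show ?thesis using top[OF i] by (simp add: mult.assoc)
  qed
  define x where "x j = norm (v $ j)" for j
  have M0: "\<forall>i<n. \<forall>j<n. 0 \<le> P $$ (i,j) + Q $$ (i,j)" using P0 Q0 by (simp add: add_nonneg_nonneg)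
  have xz: "\<forall>i<n. x i = 0"
  proof (rule tm_zero[OF M0 k])
    show "\<forall>i<n. 0 \<le> x i" unfolding x_def by simp
    show "\<forall>i<n. x i \<le> Tm n (\<lambda>i j. P $$ (i,j) + Q $$ (i,j)) x i"
    proof (intro allI impI)
      fix i assume i: "i < n"
      let ?S = "(\<Sum>j<n. (P $$ (i,j) + Q $$ (i,j)) * x j)"
      have SP: "(\<Sum>j<n. P $$ (i,j) * x j) \<ge> 0" using P0 i unfolding x_def by (auto intro!: sum_nonneg)
      have SQ: "(\<Sum>j<n. Q $$ (i,j) * x j) \<ge> 0" using Q0 i unfolding x_def by (auto intro!: sum_nonneg)
      have nP: "norm (\<Sum>j<n. complex_of_real (P $$ (i,j)) * v $ j) \<le> (\<Sum>j<n. P $$ (i,j) * x j)"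
        by (rule order.trans[OF norm_sum]) (use P0 i in \<open>auto simp: x_def norm_mult intro!: sum_mono\<close>)
      have nQ: "norm (\<Sum>j<n. complex_of_real (Q $$ (i,j)) * v $ j) \<le> (\<Sum>j<n. Q $$ (i,j) * x j)"
        by (rule order.trans[OF norm_sum]) (use Q0 i in \<open>auto simp: x_def norm_mult intro!: sum_mono\<close>)
      have "norm mu * norm mu * x i = norm (mu * mu * v $ i)" unfolding x_def by (simp add: norm_mult)
      also have "\<dots> \<le> norm (\<Sum>j<n. complex_of_real (P $$ (i,j)) * v $ j) + norm mu * norm (\<Sum>j<n. complex_of_real (Q $$ (i,j)) * v $ j)"
        unfolding bot[OF i, symmetric]
        using norm_triangle_ineq[of "\<Sum>j<n. complex_of_real (P $$ (i,j)) * v $ j" "mu * (\<Sum>j<n. complex_of_real (Q $$ (i,j)) * v $ j)"]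
        by (simp add: norm_mult)
      also have "\<dots> \<le> (\<Sum>j<n. P $$ (i,j) * x j) + norm mu * (\<Sum>j<n. Q $$ (i,j) * x j)"
        using nP nQ by (simp add: add_mono mult_left_mono)
      also have "\<dots> \<le> norm mu * norm mu * (\<Sum>j<n. P $$ (i,j) * x j) + norm mu * norm mu * (\<Sum>j<n. Q $$ (i,j) * x j)"
      proof (rule add_mono)
        have "1 * 1 \<le> norm mu * norm mu" by (rule mult_mono[OF mu1 mu1]) auto
        then have "1 \<le> norm mu * norm mu" by simp
        then show "(\<Sum>j<n. P $$ (i,j) * x j) \<le> norm mu * norm mu * (\<Sum>j<n. P $$ (i,j) * x j)"
          using SP by (simp add: mult_le_cancel_right1)
        have "norm mu \<le> norm mu * norm mu" using mu1 by (simp add: mult_le_cancel_left1)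
        then show "norm mu * (\<Sum>j<n. Q $$ (i,j) * x j) \<le> norm mu * norm mu * (\<Sum>j<n. Q $$ (i,j) * x j)"
          using SQ by (simp add: mult_right_mono)
      qed
      also have "\<dots> = norm mu * norm mu * ?S"
        by (simp add: algebra_simps sum.distrib)
      finally have "norm mu * norm mu * x i \<le> norm mu * norm mu * ?S" .
      moreover have "0 < norm mu * norm mu" using mu1 by (intro mult_pos_pos) linarith+
      ultimately have "x i \<le> ?S" by (simp add: mult_le_cancel_left_pos)
      then show "x i \<le> Tm n (\<lambda>i j. P $$ (i,j) + Q $$ (i,j)) x i" by (simp add: Tm_apply)
    qed
  qed
  have "v $ j = 0" if j: "j < n + n" for j
  proof (cases "j < n")
    case True then show ?thesis using xz unfolding x_def by simp
  next
    case False
    define i where "i = j - n"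
    have "j = n + i" "i < n" using j False unfolding i_def by auto
    then show ?thesis using top xz unfolding x_def by simp
  qed
  then show False using E(2) by auto
qed


lemma pump_strict:
  assumes X0: "\<forall>i<n. \<forall>j<n. 0 \<le> X i j"
    and Xr: "\<forall>i<n. (\<Sum>j<n. X i j) \<le> 1"
    and c: "0 < c" "c \<le> 1"
    and MX: "\<forall>i<n. \<forall>j<n. c * X i j \<le> M i j"
    and rows: "\<forall>i<n. (\<Sum>j<n. M i j) = (\<Sum>j<n. X i j)"
    and k: "\<forall>i<n. (Tm n X ^^ k) (\<lambda>_. 1) i < 1"
  shows "\<forall>i<n. (Tm n M ^^ k) (\<lambda>_. 1) i < 1"
proof (intro allI impI)
  fix i assume i: "i < n"
  have "c^k * (1 - (Tm n X ^^ k) (\<lambda>_. 1) i) \<le> 1 - (Tm n M ^^ k) (\<lambda>_. 1) i"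
    using tm_pump[OF X0 Xr c MX rows] i by blast
  moreover have "0 < c^k * (1 - (Tm n X ^^ k) (\<lambda>_. 1) i)" using c k i by simp
  ultimately show "(Tm n M ^^ k) (\<lambda>_. 1) i < 1" by linarith
qed

lemma diag_mult_entry:
  assumes "A \<in> carrier_mat n n" "i < n" "j < n"
  shows "(mat_diag n f * A) $$ (i,j) = f i * A $$ (i,j)"
  using mat_diag_mult_left[OF assms(1)] assms by simp

theorem corollary1:
  fixes n :: nat and lam beta :: "nat \<Rightarrow> real" and W Wt :: "real mat"
  assumes lam_range: "\<forall>i<n. 0 \<le> lam i \<and> lam i \<le> 1"
    and W_stoch: "row_stochastic n W"
    and Wt_stoch: "row_stochastic n Wt"
    and beta_range: "\<forall>i<n. 0 < beta i \<and> beta i < 1"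
    and hyp: "rho (mat_diag n lam * W) < 1 \<or> rho (mat_diag n lam * Wt) < 1"
  shows "rho (fjmm_matrix n (mat_diag n lam)
                ((1\<^sub>m n - mat_diag n beta) * W) (mat_diag n beta * Wt)) < 1
       \<and> rho (mat_diag n lam * ((1\<^sub>m n - mat_diag n beta) * W + mat_diag n beta * Wt)) < 1"
proof -
  have W: "W \<in> carrier_mat n n" and W0: "\<forall>i<n. \<forall>j<n. 0 \<le> W $$ (i,j)"
    and Wr: "\<forall>i<n. (\<Sum>j<n. W $$ (i,j)) = 1" using W_stoch unfolding row_stochastic_def by auto
  have Wt: "Wt \<in> carrier_mat n n" and Wt0: "\<forall>i<n. \<forall>j<n. 0 \<le> Wt $$ (i,j)"
    and Wtr: "\<forall>i<n. (\<Sum>j<n. Wt $$ (i,j)) = 1" using Wt_stoch unfolding row_stochastic_def by auto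
  let ?L = "mat_diag n lam"
  let ?W1 = "(1\<^sub>m n - mat_diag n beta) * W"
  let ?W2 = "mat_diag n beta * Wt"
  let ?P = "?L * ?W2" and ?Q = "?L * ?W1"
  have D: "1\<^sub>m n - mat_diag n beta = mat_diag n (\<lambda>i. 1 - beta i)"
    by (rule eq_matI) (auto simp: mat_diag_def)
  have W1: "?W1 \<in> carrier_mat n n" unfolding D by (rule mult_carrier_mat[OF mat_diag_dim W])
  have W2: "?W2 \<in> carrier_mat n n" by (rule mult_carrier_mat[OF mat_diag_dim Wt])
  have P: "?P \<in> carrier_mat n n" by (rule mult_carrier_mat[OF mat_diag_dim W2])
  have Q: "?Q \<in> carrier_mat n n" by (rule mult_carrier_mat[OF mat_diag_dim W1])
  have eP: "?P $$ (i,j) = lam i * (beta i * Wt $$ (i,j))" if "i < n" "j < n" for i j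
    using diag_mult_entry[OF W2 that] diag_mult_entry[OF Wt that] by simp
  have eQ: "?Q $$ (i,j) = lam i * ((1 - beta i) * W $$ (i,j))" if "i < n" "j < n" for i j
    using diag_mult_entry[OF W1 that] diag_mult_entry[OF W that] unfolding D by simp
  have Lsum: "?L * (?W1 + ?W2) = ?Q + ?P"
    by (rule mult_add_distrib_mat[OF mat_diag_dim W1 W2])
  have P0: "\<forall>i<n. \<forall>j<n. 0 \<le> ?P $$ (i,j)" using eP lam_range beta_range Wt0 by (auto intro!: mult_nonneg_nonneg)
  have Q0: "\<forall>i<n. \<forall>j<n. 0 \<le> ?Q $$ (i,j)" using eQ lam_range beta_range W0 by (auto intro!: mult_nonneg_nonneg)
  show ?thesis
  proof (cases "n = 0")
    case True
    have z: "A = B" if "A \<in> carrier_mat 0 0" "B \<in> carrier_mat 0 0" for A B :: "real mat"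
      by (rule eq_matI) (use that in auto)
    have "fjmm_matrix n ?L ?W1 ?W2 \<in> carrier_mat (n+n) (n+n)"
      unfolding fjmm_matrix_def by (rule four_block_carrier_mat[OF zero_carrier_mat Q])
    then have c1: "fjmm_matrix n ?L ?W1 ?W2 \<in> carrier_mat 0 0" using True by simp
    have c2: "?L * (?W1 + ?W2) \<in> carrier_mat 0 0" unfolding Lsum using True P Q by auto
    have c3: "?L * W \<in> carrier_mat 0 0" using mult_carrier_mat[OF mat_diag_dim W] True by simp
    have c4: "?L * Wt \<in> carrier_mat 0 0" using mult_carrier_mat[OF mat_diag_dim Wt] True by simp
    have e1: "fjmm_matrix n ?L ?W1 ?W2 = ?L * W" by (rule z[OF c1 c3])
    have e2: "?L * (?W1 + ?W2) = ?L * W" by (rule z[OF c2 c3])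
    have e3: "?L * Wt = ?L * W" by (rule z[OF c4 c3])
    have "rho (?L * W) < 1" using hyp unfolding e3 by simp
    then show ?thesis unfolding e1 e2 by simp
  next
    case False
    then have n: "n > 0" by simp
    define M where "M = (\<lambda>i j. ?P $$ (i,j) + ?Q $$ (i,j))"
    have rowsM: "(\<Sum>j<n. M i j) = lam i" if i: "i < n" for i
    proof -
      have "(\<Sum>j<n. M i j) = (\<Sum>j<n. lam i * (beta i * Wt $$ (i,j)) + lam i * ((1 - beta i) * W $$ (i,j)))"
        unfolding M_def by (rule sum.cong) (use i eP eQ in auto)
      also have "\<dots> = lam i * beta i * (\<Sum>j<n. Wt $$ (i,j)) + lam i * (1 - beta i) * (\<Sum>j<n. W $$ (i,j))"
        by (simp only: sum.distrib sum_distrib_left mult.assoc)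
      also have "\<dots> = lam i * beta i + lam i * (1 - beta i)" using Wr Wtr i by simp
      also have "\<dots> = lam i" by (simp add: algebra_simps)
      finally show ?thesis .
    qed
    have "\<exists>k. \<forall>i<n. (Tm n M ^^ k) (\<lambda>_. 1) i < 1"
      using hyp
    proof
      assume h: "rho (mat_diag n lam * W) < 1"
      have LW: "?L * W \<in> carrier_mat n n" by (rule mult_carrier_mat[OF mat_diag_dim W])
      have eLW: "(?L * W) $$ (i,j) = lam i * W $$ (i,j)" if "i < n" "j < n" for i j
        using diag_mult_entry[OF W that] .
      have LW0: "\<forall>i<n. \<forall>j<n. 0 \<le> (?L * W) $$ (i,j)" using eLW lam_range W0 by simp
      obtain k where k: "\<forall>i<n. (Tm n (\<lambda>i j. (?L * W) $$ (i,j)) ^^ k) (\<lambda>_. 1) i < 1"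
        using rho_pow_small[OF LW LW0 h] by blast
      define c where "c = Min ((\<lambda>i. 1 - beta i) ` {..<n})"
      have cin: "c \<in> (\<lambda>i. 1 - beta i) ` {..<n}" unfolding c_def using n by (intro Min_in) auto
      have cle: "c \<le> 1 - beta i" if "i < n" for i unfolding c_def using that by (intro Min_le) auto
      have c: "0 < c" "c \<le> 1" using cin beta_range by auto
      have "\<forall>i<n. (Tm n M ^^ k) (\<lambda>_. 1) i < 1"
      proof (rule pump_strict[OF LW0 _ c _ _ k])
        have sLW: "(\<Sum>j<n. (?L * W) $$ (i,j)) = lam i" if i: "i < n" for i
        proof -
          have "(\<Sum>j<n. (?L * W) $$ (i,j)) = (\<Sum>j<n. lam i * W $$ (i,j))"
            by (rule sum.cong) (use eLW i in auto)
          also have "\<dots> = lam i * (\<Sum>j<n. W $$ (i,j))" by (simp only: sum_distrib_left)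
          finally show ?thesis using Wr i by simp
        qed
        show "\<forall>i<n. (\<Sum>j<n. (?L * W) $$ (i,j)) \<le> 1"
          using sLW lam_range by simp
        show "\<forall>i<n. (\<Sum>j<n. M i j) = (\<Sum>j<n. (?L * W) $$ (i,j))"
          using sLW rowsM by simp
        show "\<forall>i<n. \<forall>j<n. c * (?L * W) $$ (i,j) \<le> M i j"
        proof (intro allI impI)
          fix i j assume ij: "i < n" "j < n"
          have "c * (lam i * W $$ (i,j)) \<le> (1 - beta i) * (lam i * W $$ (i,j))"
            using cle[OF ij(1)] lam_range W0 ij by (simp add: mult_right_mono)
          moreover have "0 \<le> ?P $$ (i,j)" using P0 ij by simp
          ultimately show "c * (?L * W) $$ (i,j) \<le> M i j"
            unfolding M_def using eLW[OF ij] eQ[OF ij] by (simp add: algebra_simps)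
        qed
      qed
      then show ?thesis by blast
    next
      assume h: "rho (mat_diag n lam * Wt) < 1"
      have LW: "?L * Wt \<in> carrier_mat n n" by (rule mult_carrier_mat[OF mat_diag_dim Wt])
      have eLW: "(?L * Wt) $$ (i,j) = lam i * Wt $$ (i,j)" if "i < n" "j < n" for i j
        using diag_mult_entry[OF Wt that] .
      have LW0: "\<forall>i<n. \<forall>j<n. 0 \<le> (?L * Wt) $$ (i,j)" using eLW lam_range Wt0 by simp
      obtain k where k: "\<forall>i<n. (Tm n (\<lambda>i j. (?L * Wt) $$ (i,j)) ^^ k) (\<lambda>_. 1) i < 1"
        using rho_pow_small[OF LW LW0 h] by blast
      define c where "c = Min (beta ` {..<n})"
      have cin: "c \<in> beta ` {..<n}" unfolding c_def using n by (intro Min_in) auto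
      have cle: "c \<le> beta i" if "i < n" for i unfolding c_def using that by (intro Min_le) auto
      have c: "0 < c" "c \<le> 1" using cin beta_range by auto
      have "\<forall>i<n. (Tm n M ^^ k) (\<lambda>_. 1) i < 1"
      proof (rule pump_strict[OF LW0 _ c _ _ k])
        have sLW: "(\<Sum>j<n. (?L * Wt) $$ (i,j)) = lam i" if i: "i < n" for i
        proof -
          have "(\<Sum>j<n. (?L * Wt) $$ (i,j)) = (\<Sum>j<n. lam i * Wt $$ (i,j))"
            by (rule sum.cong) (use eLW i in auto)
          also have "\<dots> = lam i * (\<Sum>j<n. Wt $$ (i,j))" by (simp only: sum_distrib_left)
          finally show ?thesis using Wtr i by simp
        qed
        show "\<forall>i<n. (\<Sum>j<n. (?L * Wt) $$ (i,j)) \<le> 1"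
          using sLW lam_range by simp
        show "\<forall>i<n. (\<Sum>j<n. M i j) = (\<Sum>j<n. (?L * Wt) $$ (i,j))"
          using sLW rowsM by simp
        show "\<forall>i<n. \<forall>j<n. c * (?L * Wt) $$ (i,j) \<le> M i j"
        proof (intro allI impI)
          fix i j assume ij: "i < n" "j < n"
          have "c * (lam i * Wt $$ (i,j)) \<le> beta i * (lam i * Wt $$ (i,j))"
            using cle[OF ij(1)] lam_range Wt0 ij by (simp add: mult_right_mono)
          moreover have "0 \<le> ?Q $$ (i,j)" using Q0 ij by simp
          ultimately show "c * (?L * Wt) $$ (i,j) \<le> M i j"
            unfolding M_def using eLW[OF ij] eP[OF ij] by (simp add: algebra_simps)
        qed
      qed
      then show ?thesis by blast
    qed
    then obtain k where k: "\<forall>i<n. (Tm n M ^^ k) (\<lambda>_. 1) i < 1" by blast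
    have k': "\<forall>i<n. (Tm n (\<lambda>i j. ?P $$ (i,j) + ?Q $$ (i,j)) ^^ k) (\<lambda>_. 1) i < 1"
      using k unfolding M_def .
    have r1: "rho (fjmm_matrix n ?L ?W1 ?W2) < 1"
      unfolding fjmm_matrix_def by (rule fjmm_rho_lt1[OF n P Q P0 Q0 k'])
    have QP: "?Q + ?P \<in> carrier_mat n n" by (rule add_carrier_mat[OF P])
    have eQP: "\<forall>i<n. \<forall>j<n. (?Q + ?P) $$ (i,j) = 1 * M i j"
      using carrier_matD[OF P] carrier_matD[OF Q] unfolding M_def by (simp add: index_add_mat)
    have QP0: "\<forall>i<n. \<forall>j<n. 0 \<le> (?Q + ?P) $$ (i,j)"
    proof (intro allI impI)
      fix i j assume ij: "i < n" "j < n"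
      have "(?Q + ?P) $$ (i,j) = 1 * M i j" using eQP ij by blast
      also have "\<dots> = ?P $$ (i,j) + ?Q $$ (i,j)" unfolding M_def by simp
      also have "\<dots> \<ge> 0" using P0 Q0 ij by (meson add_nonneg_nonneg)
      finally show "0 \<le> (?Q + ?P) $$ (i,j)" .
    qed
    have "\<forall>i<n. (Tm n (\<lambda>i j. (?Q + ?P) $$ (i,j)) ^^ k) (\<lambda>_. 1) i < 1"
    proof (intro allI impI)
      fix i assume i: "i < n"
      have sc: "\<forall>i<n. (Tm n (\<lambda>i j. (?Q + ?P) $$ (i,j)) ^^ k) (\<lambda>_. 1) i = 1^k * (Tm n (\<lambda>i j. M i j) ^^ k) (\<lambda>_. 1) i"
        by (rule Tm_scale[OF eQP])
      have "(Tm n (\<lambda>i j. (?Q + ?P) $$ (i,j)) ^^ k) (\<lambda>_. 1) i = 1^k * (Tm n (\<lambda>i j. M i j) ^^ k) (\<lambda>_. 1) i"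
        using sc i by (rule_tac allE[OF sc, of i]) simp
      also have "\<dots> = (Tm n M ^^ k) (\<lambda>_. 1) i" by simp
      also have "\<dots> < 1" using k i by (rule_tac allE[OF k, of i]) simp
      finally show "(Tm n (\<lambda>i j. (?Q + ?P) $$ (i,j)) ^^ k) (\<lambda>_. 1) i < 1" .
    qed
    then have r2: "rho (?Q + ?P) < 1"
      by (rule rho_lt1_from_tm[OF QP n QP0])
    show ?thesis unfolding Lsum using r1 r2 by (rule conjI)
  qed
qed

end
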